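(* Let $a,b\in\mathbb{Q}_3$ with $\gamma(a)=1$, $\gamma(b)=0$, and let $x=\sum_{k\ge0}x_k3^k\in\mathbb{Z}_3^*$ be such that $A_0=x_0^2+a_0\not\equiv0\pmod3$. Then $x$ is a solution of $x^3+ax=b$ if and only if the congruences $$x_0^3\equiv b_0\pmod3,$$ $$x_0a_0+M_1(x_0)\equiv b_1\pmod3,$$ $$(x_0^2+a_0)x_{k-1}+x_{k-2}a_1+\dots+x_0a_{k-1}+N'_k(x_0,\dots,x_{k-2})+M_k(x_0,\dots,x_{k-2})\equiv b_k\pmod3,\quad k\ge2,$$ are fulfilled, where $M_1(x_0)=\frac{x_0^3-b_0}{3}$ and the integers $M_k(x_0,\dots,x_{k-2})$, $k\ge2$, are defined by $$x_0a_0+M_1(x_0)=b_1+3M_2(x_0),$$ $$(x_0^2+a_0)x_{k-1}+N'_k(x_0,\dots,x_{k-2})+x_{k-2}a_1+\dots+x_0a_{k-1}+M_k(x_0,\dots,x_{k-2})=b_k+3M_{k+1}(x_0,\dots,x_{k-1}),\quad k\ge2.$$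
   Context: Write $a=3^{\gamma(a)}(a_0+a_13+a_23^2+\dots)$, $b=3^{\gamma(b)}(b_0+b_13+b_23^2+\dots)$ in canonical form, with digits $a_j,b_j\in\{0,1,2\}$, $a_0,b_0\ne0$, $\gamma(a),\gamma(b)\in\mathbb{Z}$. $\mathbb{Z}_3^*$ is the set of $3$-adic units; $x\in\mathbb{Z}_3^*$ is written $x=x_0+x_13+x_23^2+\dots$ with $x_j\in\{0,1,2\}$, $x_0\ne0$. For $k\ge1$, $N_k(x_0,\dots,x_{k-1})=\sum \frac{3!}{m_0!\cdots m_{k-1}!}x_0^{m_0}\cdots x_{k-1}^{m_{k-1}}$, the sum over nonnegative integers $m_0,\dots,m_{k-1}$ with $\sum_{i=0}^{k-1}m_i=3$ and $\sum_{i=1}^{k-1}im_i=k$ (so $N_1=0$). Define, for $s$ a positive integer, $$N'_j=\begin{cases}\frac{N_{j-1}}{3}, & j=3s-1,\\ \frac{N_{j-1}}{3}+x_{j/3}^3, & j=3s,\\ \frac{N_{j-1}-x_{(j-1)/3}^3}{3}, & j=3s+1.\end{cases}$$ *)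

theory Defs
  imports "HOL-Library.FuncSet" "HOL-Number_Theory.Cong"
begin

text \<open>3-adic digit sequences: a digit sequence d represents sum_j d j * 3^j.\<close>

definition digits3 :: "(nat \<Rightarrow> int) \<Rightarrow> bool" where
  "digits3 d \<longleftrightarrow> (\<forall>j. 0 \<le> d j \<and> d j \<le> 2)"

definition trunc3 :: "(nat \<Rightarrow> int) \<Rightarrow> nat \<Rightarrow> int" where
  "trunc3 d n = (\<Sum>j<n. d j * 3 ^ j)"

text \<open>x is a solution of x^3 + a x = b in Q_3, where a = 3 * (a_0 + a_1 3 + ...)
  (gamma(a) = 1) and b = b_0 + b_1 3 + ... (gamma(b) = 0). Equality in Z_3 is
  equality of all truncations modulo 3^n.\<close>
definition is_solution3 :: "(nat \<Rightarrow> int) \<Rightarrow> (nat \<Rightarrow> int) \<Rightarrow> (nat \<Rightarrow> int) \<Rightarrow> bool" where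
  "is_solution3 a b x \<longleftrightarrow>
     (\<forall>n. [trunc3 x n ^ 3 + 3 * trunc3 a n * trunc3 x n = trunc3 b n] (mod 3 ^ n))"

definition Nk :: "nat \<Rightarrow> (nat \<Rightarrow> int) \<Rightarrow> int" where
  "Nk k x = (\<Sum>m \<in> {m \<in> {0..<k} \<rightarrow>\<^sub>E {0..3::nat}.
                  (\<Sum>i<k. m i) = 3 \<and> (\<Sum>i\<in>{1..<k}. i * m i) = k}.
      int (fact 3 div (\<Prod>i<k. fact (m i))) * (\<Prod>i<k. x i ^ m i))"

text \<open>N'_j (for j \<ge> 2); the divisions are exact.\<close>
definition Nprime :: "nat \<Rightarrow> (nat \<Rightarrow> int) \<Rightarrow> int" where
  "Nprime j x =
     (if j mod 3 = 2 then Nk (j - 1) x div 3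
      else if j mod 3 = 0 then Nk (j - 1) x div 3 + x (j div 3) ^ 3
      else (Nk (j - 1) x - x ((j - 1) div 3) ^ 3) div 3)"

definition Lhs :: "(nat \<Rightarrow> int) \<Rightarrow> (nat \<Rightarrow> int) \<Rightarrow> nat \<Rightarrow> int \<Rightarrow> int" where
  "Lhs a x k m =
     (if k = 1 then x 0 * a 0 + m
      else (x 0 ^ 2 + a 0) * x (k - 1) + (\<Sum>i\<in>{1..<k}. x (k - 1 - i) * a i)
           + Nprime k x + m)"

text \<open>The carries M_k (k \<ge> 1); M_0 is unused.\<close>
fun Mk :: "(nat \<Rightarrow> int) \<Rightarrow> (nat \<Rightarrow> int) \<Rightarrow> (nat \<Rightarrow> int) \<Rightarrow> nat \<Rightarrow> int" where
  "Mk a b x 0 = 0"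
| "Mk a b x (Suc 0) = (x 0 ^ 3 - b 0) div 3"
| "Mk a b x (Suc (Suc k)) = (Lhs a x (Suc k) (Mk a b x (Suc k)) - b (Suc k)) div 3"

end

theory Submission imports Defs "HOL-Computational_Algebra.Polynomial" begin


lemma fact_prod_dvd:
  "finite I \<Longrightarrow> (\<Prod>i\<in>I. fact (m i)) dvd (fact (sum m I) :: nat)"
proof (induction I rule: finite_induct)
  case empty then show ?case by simp
next
  case (insert a I)
  have "fact (m a) * (\<Prod>i\<in>I. fact (m i)) dvd (fact (m a) * fact (sum m I) :: nat)"
    using insert by (simp add: mult_dvd_mono)
  also have "\<dots> dvd fact (m a + sum m I)" by (rule fact_fact_dvd_fact)
  finally show ?case using insert by simp
qed

definition MS :: "'b set \<Rightarrow> nat \<Rightarrow> ('b \<Rightarrow> nat) set" where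
  "MS I c = {m \<in> I \<rightarrow>\<^sub>E {0..c}. sum m I = c}"

lemma multinomial:
  fixes y :: "'b \<Rightarrow> 'a::comm_ring_1"
  assumes "finite I"
  shows "(\<Sum>i\<in>I. y i) ^ c = (\<Sum>m\<in>MS I c. of_nat (fact c div (\<Prod>i\<in>I. fact (m i))) * (\<Prod>i\<in>I. y i ^ m i))"
  using assms
proof (induction I arbitrary: c rule: finite_induct)
  case empty
  show ?case
  proof (cases "c = 0")
    case True
    have e: "MS {} c = {\<lambda>_. undefined}" using True by (auto simp: MS_def)
    show ?thesis using True by (subst e) simp
  next
    case False
    have e: "MS {} c = {}" using False by (auto simp: MS_def)
    show ?thesis using False by (subst e) (simp add: power_0_left)
  qed
next
  case (insert a I)
  let ?g = "\<lambda>(j, m'). of_nat (c choose j) * y a ^ j * (of_nat (fact (c - j) div (\<Prod>i\<in>I. fact (m' i))) * (\<Prod>i\<in>I. y i ^ m' i))"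
  have "(\<Sum>i\<in>insert a I. y i) ^ c = (y a + (\<Sum>i\<in>I. y i)) ^ c" using insert by simp
  also have "\<dots> = (\<Sum>j\<le>c. of_nat (c choose j) * y a ^ j * (\<Sum>i\<in>I. y i) ^ (c - j))"
    by (rule binomial_ring)
  also have "\<dots> = (\<Sum>j\<le>c. \<Sum>m'\<in>MS I (c - j). ?g (j, m'))"
    by (simp add: insert.IH sum_distrib_left)
  also have "\<dots> = (\<Sum>p\<in>Sigma {..c} (\<lambda>j. MS I (c - j)). ?g p)"
  proof -
    have f1: "finite {..c}" by simp
    have f2: "\<forall>j\<in>{..c}. finite (MS I (c - j))" using insert by (auto simp: MS_def intro!: finite_PiE)
    show ?thesis using sum.Sigma[OF f1 f2, of "\<lambda>j m'. ?g (j, m')"] by (simp add: split_def)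
  qed
  also have "\<dots> = (\<Sum>m\<in>MS (insert a I) c. of_nat (fact c div (\<Prod>i\<in>insert a I. fact (m i))) * (\<Prod>i\<in>insert a I. y i ^ m i))"
  proof (rule sum.reindex_bij_witness[where i = "\<lambda>m. (m a, m(a := undefined))" and j = "\<lambda>(j, m'). m'(a := j)"])
    fix m assume m: "m \<in> MS (insert a I) c"
    show "(case (m a, m(a := undefined)) of (j, m') \<Rightarrow> m'(a := j)) = m" by simp
    have sI: "sum (m(a := undefined)) I = sum m I"
      by (rule sum.cong) (use insert in auto)
    have "m a + sum m I = c" using m insert by (simp add: MS_def)
    moreover have "m(a := undefined) \<in> I \<rightarrow>\<^sub>E {0..c - m a}"
    proof -
      have "m x \<le> sum m I" if "x \<in> I" for x using that insert(1) by (intro member_le_sum) auto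
      then show ?thesis using m insert by (auto simp: MS_def PiE_def Pi_def extensional_def)
    qed
    moreover have "m a \<le> c" using m by (auto simp: MS_def PiE_def Pi_def)
    ultimately show "(m a, m(a := undefined)) \<in> Sigma {..c} (\<lambda>j. MS I (c - j))"
      using sI by (auto simp: MS_def)
  next
    fix p assume p: "p \<in> Sigma {..c} (\<lambda>j. MS I (c - j))"
    obtain j m' where pj: "p = (j, m')" by fastforce
    have j: "j \<le> c" and m': "m' \<in> I \<rightarrow>\<^sub>E {0..c - j}" "sum m' I = c - j" using p pj by (auto simp: MS_def)
    have ma: "m' a = undefined" using m' insert by (auto simp: PiE_def extensional_def)
    show "(\<lambda>m. (m a, m(a := undefined))) ((\<lambda>(j, m'). m'(a := j)) p) = p"
      using pj ma by auto
    have sI: "sum (m'(a := j)) I = sum m' I"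
      by (rule sum.cong) (use insert in auto)
    have "m'(a := j) \<in> insert a I \<rightarrow>\<^sub>E {0..c}" using m' j insert by (auto simp: PiE_def Pi_def extensional_def)
    then show "(\<lambda>(j, m'). m'(a := j)) p \<in> MS (insert a I) c"
      using pj sI m' j insert by (simp add: MS_def)
    have pI: "(\<Prod>i\<in>I. f ((m'(a := j)) i)) = (\<Prod>i\<in>I. f (m' i))" for f :: "nat \<Rightarrow> 'a"
      by (rule prod.cong) (use insert in auto)
    have pI2: "(\<Prod>i\<in>I. fact ((m'(a := j)) i)) = (\<Prod>i\<in>I. fact (m' i) :: nat)"
      by (rule prod.cong) (use insert in auto)
    have pI3: "(\<Prod>i\<in>I. y i ^ (m'(a := j)) i) = (\<Prod>i\<in>I. y i ^ m' i)"
      by (rule prod.cong) (use insert in auto)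
    obtain q where q: "fact (c - j) = (\<Prod>i\<in>I. fact (m' i)) * (q::nat)"
      using fact_prod_dvd[OF insert(1), of m'] m' by (auto elim: dvdE)
    have Ppos: "(\<Prod>i\<in>I. fact (m' i) :: nat) > 0" by (simp add: prod_pos)
    have "fact c = (c choose j) * fact j * ((\<Prod>i\<in>I. fact (m' i)) * q)"
      using binomial_fact_lemma[OF j] q by (simp add: algebra_simps)
    then have "fact c div (fact j * (\<Prod>i\<in>I. fact (m' i))) = (c choose j) * q"
      using Ppos by (simp add: ac_simps)
    moreover have "fact (c - j) div (\<Prod>i\<in>I. fact (m' i)) = q" using q Ppos by simp
    ultimately show "of_nat (fact c div (\<Prod>i\<in>insert a I. fact (((\<lambda>(j, m'). m'(a := j)) p) i))) *
           (\<Prod>i\<in>insert a I. y i ^ ((\<lambda>(j, m'). m'(a := j)) p) i) = ?g p"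
      using pj insert pI2 pI3 by (simp add: algebra_simps)
  qed
  finally show ?case .
qed



definition Px :: "(nat \<Rightarrow> int) \<Rightarrow> nat \<Rightarrow> int poly" where
  "Px x n = (\<Sum>i<n. monom (x i) i)"

lemma coeff_Px: "coeff (Px x n) i = (if i < n then x i else 0)"
  by (simp add: Px_def coeff_sum coeff_monom)

lemma poly_Px: "poly (Px x n) 3 = trunc3 x n"
  by (simp add: Px_def poly_sum poly_monom trunc3_def)

lemma Px_Suc: "Px x (Suc n) = Px x n + monom (x n) n"
  by (simp add: Px_def)

lemma prod_monom:
  "finite I \<Longrightarrow> (\<Prod>i\<in>I. monom (f i) (g i)) = monom (\<Prod>i\<in>I. f i) (\<Sum>i\<in>I. g i)"
  by (induction I rule: finite_induct) (simp_all add: mult_monom monom_0 one_pCons)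

lemma Nk_coeff: "Nk k x = coeff (Px x k ^ 3) k"
proof -
  have "Px x k ^ 3 = (\<Sum>m\<in>MS {..<k} 3. of_nat (fact 3 div (\<Prod>i\<in>{..<k}. fact (m i))) *
            (\<Prod>i\<in>{..<k}. monom (x i) i ^ m i))"
    unfolding Px_def by (rule multinomial) simp
  also have "\<dots> = (\<Sum>m\<in>MS {..<k} 3. monom (int (fact 3 div (\<Prod>i\<in>{..<k}. fact (m i))) *
            (\<Prod>i<k. x i ^ m i)) (\<Sum>i<k. i * m i))"
    by (rule sum.cong) (simp_all add: monom_power prod_monom of_nat_mult_conv_smult smult_monom mult.commute)
  finally have "coeff (Px x k ^ 3) k = (\<Sum>m\<in>MS {..<k} 3. if (\<Sum>i<k. i * m i) = k then
        int (fact 3 div (\<Prod>i\<in>{..<k}. fact (m i))) * (\<Prod>i<k. x i ^ m i) else 0)"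
    by (simp add: coeff_sum coeff_monom eq_commute)
  also have "\<dots> = (\<Sum>m\<in>{m\<in>MS {..<k} 3. (\<Sum>i<k. i * m i) = k}.
        int (fact 3 div (\<Prod>i\<in>{..<k}. fact (m i))) * (\<Prod>i<k. x i ^ m i))"
    by (rule sum.inter_filter[symmetric]) (auto simp: MS_def intro!: finite_PiE)
  also have "{m\<in>MS {..<k} 3. (\<Sum>i<k. i * m i) = k} =
      {m \<in> {0..<k} \<rightarrow>\<^sub>E {0..3::nat}. (\<Sum>i<k. m i) = 3 \<and> (\<Sum>i\<in>{1..<k}. i * m i) = k}"
  proof -
    have "(\<Sum>i<k. i * m i) = (\<Sum>i\<in>{1..<k}. i * m i)" for m :: "nat \<Rightarrow> nat"
      by (rule sum.mono_neutral_right) auto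
    then show ?thesis by (auto simp: MS_def atLeast0LessThan)
  qed
  finally show ?thesis by (simp add: Nk_def)
qed

definition F :: "(nat \<Rightarrow> int) \<Rightarrow> nat \<Rightarrow> int" where
  "F x k = (if 3 dvd k \<and> k \<noteq> 0 then x (k div 3) ^ 3 else 0)"

lemma frob: "\<exists>R. Px x k ^ 3 = (\<Sum>i<k. monom (x i ^ 3) (3*i)) + smult 3 R"
proof (induction k)
  case 0 then show ?case by (auto simp: Px_def)
next
  case (Suc k)
  then obtain R where R: "Px x k ^ 3 = (\<Sum>i<k. monom (x i ^ 3) (3*i)) + smult 3 R" by blast
  let ?p = "Px x k" and ?m = "monom (x k) k"
  have "(?p + ?m) ^ 3 = ?p ^ 3 + ?m ^ 3 + smult 3 (?p^2 * ?m + ?p * ?m^2)"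
    unfolding numeral_mult_conv_smult[symmetric] by (simp add: power3_eq_cube power2_eq_square algebra_simps)
  also have "?m ^ 3 = monom (x k ^ 3) (3 * k)" by (simp add: monom_power mult.commute)
  finally show ?case using R
    by (intro exI[of _ "R + (?p^2 * ?m + ?p * ?m^2)"]) (simp add: Px_Suc smult_add_right algebra_simps)
qed

lemma coeff_frob: "coeff (\<Sum>i<k. monom (x i ^ 3) (3*i)) k = F x k"
proof (cases "3 dvd k")
  case True
  then obtain q where q: "k = 3 * q" by blast
  have "coeff (\<Sum>i<k. monom (x i ^ 3) (3*i)) k = (\<Sum>i<k. if i = q then x i ^ 3 else 0)"
    unfolding coeff_sum coeff_monom q by (rule sum.cong) auto
  also have "\<dots> = F x k" using q by (auto simp: F_def)
  finally show ?thesis .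
next
  case False
  then have "coeff (\<Sum>i<k. monom (x i ^ 3) (3*i)) k = (\<Sum>i<k. 0)"
    unfolding coeff_sum coeff_monom by (intro sum.cong) auto
  then show ?thesis using False by (simp add: F_def)
qed

definition E :: "(nat \<Rightarrow> int) \<Rightarrow> nat \<Rightarrow> int" where
  "E x k = (Nk k x - F x k) div 3"

lemma Nk_FE: "Nk k x = F x k + 3 * E x k"
proof -
  obtain R where R: "Px x k ^ 3 = (\<Sum>i<k. monom (x i ^ 3) (3*i)) + smult 3 R" using frob by blast
  have "Nk k x = F x k + 3 * coeff R k" using R coeff_frob[of x k] by (simp add: Nk_coeff)
  then show ?thesis by (simp add: E_def)
qed

lemma Nk0: "Nk 0 x = 0" by (simp add: Nk_coeff Px_def)

lemma coeff_agree:
  assumes "\<forall>i\<le>j. coeff p i = coeff p' i" "\<forall>i\<le>j. coeff q i = coeff q' i"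
  shows "\<forall>i\<le>j. coeff (p * q) i = coeff (p' * q') i"
  using assms by (auto simp: coeff_mult intro!: sum.cong)

lemma coeff_cube:
  assumes "j < n"
  shows "coeff (Px x n ^ 3) j = (if j = 0 then x 0 ^ 3 else Nk j x + 3 * x 0 ^ 2 * x j)"
proof -
  have ag: "\<forall>i\<le>j. coeff (Px x n) i = coeff (Px x (Suc j)) i" using assms by (simp add: coeff_Px)
  have "\<forall>i\<le>j. coeff (Px x n ^ 3) i = coeff (Px x (Suc j) ^ 3) i"
    unfolding power3_eq_cube by (intro coeff_agree ag)
  then have 1: "coeff (Px x n ^ 3) j = coeff (Px x (Suc j) ^ 3) j" by simp
  let ?p = "Px x j" and ?m = "monom (x j) j"
  have "(?p + ?m) ^ 3 = ?p ^ 3 + smult 3 (?m * ?p^2) + smult 3 (monom (x j ^ 2) (j * 2) * ?p) + monom (x j ^ 3) (j*3)"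
    unfolding numeral_mult_conv_smult[symmetric] monom_power[symmetric]
    by (simp add: power3_eq_cube power2_eq_square algebra_simps)
  then have "coeff (Px x (Suc j) ^ 3) j = Nk j x + 3 * (x j * coeff (?p^2) 0) +
      3 * (if j < j * 2 then 0 else x j ^ 2 * coeff ?p (j - j * 2)) + (if j * 3 = j then x j ^ 3 else 0)"
    by (simp add: Px_Suc coeff_monom_mult Nk_coeff coeff_monom)
  moreover have "coeff (?p^2) 0 = (if j = 0 then 0 else x 0 ^ 2)"
    by (simp add: power2_eq_square coeff_mult_0 coeff_Px)
  ultimately show ?thesis using 1 by (cases "j = 0") (auto simp: coeff_Px Nk0)
qed

definition Q :: "(nat \<Rightarrow> int) \<Rightarrow> (nat \<Rightarrow> int) \<Rightarrow> nat \<Rightarrow> int poly" where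
  "Q a x n = Px x n ^ 3 + monom 1 1 * (Px a n * Px x n)"

lemma poly_Q: "poly (Q a x n) 3 = trunc3 x n ^ 3 + 3 * trunc3 a n * trunc3 x n"
  by (simp add: Q_def poly_Px poly_monom)

definition cc :: "(nat \<Rightarrow> int) \<Rightarrow> (nat \<Rightarrow> int) \<Rightarrow> nat \<Rightarrow> int" where
  "cc a x j = (if j = 0 then x 0 ^ 3 else Nk j x + 3 * x 0 ^ 2 * x j + (\<Sum>i\<le>j-1. a i * x (j - 1 - i)))"

lemma coeff_Q: "j < n \<Longrightarrow> coeff (Q a x n) j = cc a x j"
proof -
  assume j: "j < n"
  have "coeff (monom 1 1 * (Px a n * Px x n)) j = (if j = 0 then 0 else (\<Sum>i\<le>j-1. a i * x (j - 1 - i)))"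
  proof (cases "j = 0")
    case False
    have "coeff (monom 1 1 * (Px a n * Px x n)) j = coeff (Px a n * Px x n) (j - 1)"
      using False by (simp add: coeff_monom_mult)
    also have "\<dots> = (\<Sum>i\<le>j-1. a i * x (j - 1 - i))"
      unfolding coeff_mult using j by (intro sum.cong) (auto simp: coeff_Px)
    finally show ?thesis using False by simp
  qed (simp add: coeff_monom_mult)
  then show ?thesis using j by (simp add: Q_def cc_def coeff_cube)
qed

lemma poly_split: "\<exists>r. poly p (z::int) = (\<Sum>j<n. coeff p j * z ^ j) + z ^ n * r"
proof (induction n arbitrary: p)
  case 0 then show ?case by (intro exI[of _ "poly p z"]) simp
next
  case (Suc n)
  obtain c q where p: "p = pCons c q" by (cases p) auto
  obtain r where r: "poly q z = (\<Sum>j<n. coeff q j * z ^ j) + z ^ n * r" using Suc by blast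
  have "poly p z = c + z * ((\<Sum>j<n. coeff q j * z ^ j) + z ^ n * r)" using p r by simp
  also have "\<dots> = (\<Sum>j<Suc n. coeff p j * z ^ j) + z ^ Suc n * r"
    unfolding sum.lessThan_Suc_shift using p by (simp add: sum_distrib_left algebra_simps)
  finally show ?case by blast
qed



definition T :: "(nat \<Rightarrow> int) \<Rightarrow> (nat \<Rightarrow> int) \<Rightarrow> nat \<Rightarrow> int" where
  "T a x j = (if j = 0 then x 0 ^ 3 else Lhs a x j 0)"

definition G :: "(nat \<Rightarrow> int) \<Rightarrow> nat \<Rightarrow> int" where
  "G x j = (if j = 0 then 0 else E x j + x 0 ^ 2 * x j)"

lemma Lhs_add: "Lhs a x k m = Lhs a x k 0 + m"
  by (simp add: Lhs_def)

lemma Nprime_EF: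
  assumes "2 \<le> n" shows "Nprime n x = E x (n - 1) + F x n"
proof -
  have N: "Nk (n - 1) x = F x (n - 1) + 3 * E x (n - 1)" by (rule Nk_FE)
  consider "n mod 3 = 2" | "n mod 3 = 0" | "n mod 3 = 1" by linarith
  then show ?thesis
  proof cases
    case 1
    then have "\<not> 3 dvd (n - 1)" "\<not> 3 dvd n" using assms by presburger+
    then show ?thesis using 1 N by (simp add: Nprime_def F_def)
  next
    case 2
    then have "\<not> 3 dvd (n - 1)" "3 dvd n" using assms by presburger+
    then show ?thesis using 2 N assms by (simp add: Nprime_def F_def)
  next
    case 3
    then have "3 dvd (n - 1)" "\<not> 3 dvd n" "n - 1 \<noteq> 0" using assms by presburger+
    then show ?thesis using 3 N assms by (simp add: Nprime_def F_def)
  qed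
qed

lemma S_split:
  fixes n :: nat and a x :: "nat \<Rightarrow> int"
  assumes "1 \<le> n"
  shows "(\<Sum>i\<le>n-1. a i * x (n-1-i)) = a 0 * x (n-1) + (\<Sum>i\<in>{1..<n}. x (n-1-i) * a i)"
proof -
  obtain l where l: "n = Suc l" using assms by (cases n) auto
  have 1: "(\<Sum>i\<in>{1..<n}. x (n-1-i) * a i) = (\<Sum>i<l. x (l - Suc i) * a (Suc i))"
    unfolding l One_nat_def sum.shift_bounds_Suc_ivl by (simp add: atLeast0LessThan)
  have 2: "(\<Sum>i\<le>n-1. a i * x (n-1-i)) = a 0 * x l + (\<Sum>i<l. a (Suc i) * x (l - Suc i))"
    unfolding l by (simp add: sum.atMost_shift)
  show ?thesis unfolding 1 2 by (simp add: mult.commute l)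
qed

lemma step: "cc a x n + G x (n - 1) = T a x n + 3 * G x n"
proof -
  consider "n = 0" | "n = 1" | "2 \<le> n" by linarith
  then show ?thesis
  proof cases
    case 1 then show ?thesis by (simp add: cc_def G_def T_def)
  next
    case 2
    have "Nk 1 x = 3 * E x 1" using Nk_FE[of 1 x] by (simp add: F_def)
    then show ?thesis using 2 by (simp add: cc_def G_def T_def Lhs_def)
  next
    case 3
    show ?thesis using 3 Nk_FE[of n x] Nprime_EF[OF 3, of x] S_split[of n a x]
      by (simp add: cc_def G_def T_def Lhs_def algebra_simps)
  qed
qed

lemma telescope: "(\<Sum>j<n. 3^j * cc a x j) = (\<Sum>j<n. 3^j * T a x j) + 3^n * G x (n - 1)"
proof (induction n)
  case 0 then show ?case by (simp add: G_def)
next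
  case (Suc n)
  have "(\<Sum>j<Suc n. 3^j * cc a x j) = (\<Sum>j<n. 3^j * T a x j) + 3^n * (cc a x n + G x (n - 1))"
    using Suc by (simp add: algebra_simps)
  also have "\<dots> = (\<Sum>j<Suc n. 3^j * T a x j) + 3^Suc n * G x n"
    by (simp only: step) (simp add: algebra_simps)
  finally show ?case by simp
qed

lemma main_cong: "is_solution3 a b x \<longleftrightarrow> (\<forall>n. (3::int)^n dvd (\<Sum>j<n. 3^j * (T a x j - b j)))"
proof -
  have "[trunc3 x n ^ 3 + 3 * trunc3 a n * trunc3 x n = trunc3 b n] (mod 3 ^ n) \<longleftrightarrow>
        (3::int)^n dvd (\<Sum>j<n. 3^j * (T a x j - b j))" for n
  proof -
    obtain r where r: "poly (Q a x n) 3 = (\<Sum>j<n. coeff (Q a x n) j * 3 ^ j) + 3 ^ n * r"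
      using poly_split by blast
    have "(\<Sum>j<n. coeff (Q a x n) j * 3 ^ j) = (\<Sum>j<n. 3^j * cc a x j)"
      by (intro sum.cong) (auto simp: coeff_Q)
    have tb: "trunc3 b n = (\<Sum>j<n. 3^j * b j)" by (simp add: trunc3_def mult.commute)
    have sd: "(\<Sum>j<n. 3^j * (T a x j - b j)) = (\<Sum>j<n. 3^j * T a x j) - (\<Sum>j<n. 3^j * b j)"
      by (simp add: right_diff_distrib sum_subtractf)
    have "trunc3 x n ^ 3 + 3 * trunc3 a n * trunc3 x n = poly (Q a x n) 3" by (simp add: poly_Q)
    also have "\<dots> = (\<Sum>j<n. 3^j * T a x j) + 3^n * (G x (n - 1) + r)"
      using r \<open>(\<Sum>j<n. coeff (Q a x n) j * 3 ^ j) = _\<close> telescope by (simp add: algebra_simps)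
    finally have "trunc3 x n ^ 3 + 3 * trunc3 a n * trunc3 x n - trunc3 b n =
        (\<Sum>j<n. 3^j * (T a x j - b j)) + 3^n * (G x (n - 1) + r)"
      using tb sd by simp
    then show ?thesis by (simp add: cong_iff_dvd_diff dvd_add_left_iff)
  qed
  then show ?thesis by (simp add: is_solution3_def)
qed

lemma Mk_Suc: "Mk a b x (Suc k) = (T a x k - b k + Mk a b x k) div 3"
  by (cases k) (simp_all add: T_def Lhs_add[of a x _ "Mk a b x _"] algebra_simps)

lemma aux3: "(s::int) = 3*q + r \<Longrightarrow> 3^n * s = 3^Suc n * q + 3^n * r"
  by (simp add: algebra_simps)

lemma carry: "(\<Sum>j<n. 3^j * (T a x j - b j)) =
   3^n * Mk a b x n + (\<Sum>j<n. 3^j * ((T a x j - b j + Mk a b x j) mod 3))"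
proof (induction n)
  case 0 then show ?case by simp
next
  case (Suc n)
  let ?s = "T a x n - b n + Mk a b x n"
  let ?R = "(\<Sum>j<n. 3^j * ((T a x j - b j + Mk a b x j) mod 3))"
  have d: "3^n * ?s = 3^Suc n * (?s div 3) + 3^n * (?s mod 3)"
    by (rule aux3) simp
  have "(\<Sum>j<Suc n. 3^j * (T a x j - b j)) = ?R + 3^n * ?s"
    using Suc by (simp add: algebra_simps)
  also have "\<dots> = ?R + (3^Suc n * (?s div 3) + 3^n * (?s mod 3))"
    by (simp only: d)
  also have "\<dots> = 3^Suc n * Mk a b x (Suc n) + (?R + 3^n * (?s mod 3))"
    by (simp only: Mk_Suc)
  also have "?R + 3^n * (?s mod 3) = (\<Sum>j<Suc n. 3^j * ((T a x j - b j + Mk a b x j) mod 3))"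
    by simp
  finally show ?case .
qed

lemma bound: "(\<Sum>j<n. (3::int)^j * (r j mod 3)) < 3^n"
proof (induction n)
  case 0 then show ?case by simp
next
  case (Suc n)
  have "r n mod 3 \<le> 2" by simp
  then have h: "3^n * (r n mod 3) \<le> (3::int)^n * 2" by (intro mult_left_mono) auto
  have e: "(\<Sum>j<Suc n. (3::int)^j * (r j mod 3)) = (\<Sum>j<n. 3^j * (r j mod 3)) + 3^n * (r n mod 3)" by simp
  have p: "(3::int)^Suc n = 3 * 3^n" by simp
  show ?case unfolding e p using Suc h by linarith
qed

lemma nonneg: "0 \<le> (3::int)^j * (r j mod 3)" by simp

theorem theorem3p7:
  fixes a b x :: "nat \<Rightarrow> int"
  assumes "digits3 a" and "a 0 \<noteq> 0"
    and "digits3 b" and "b 0 \<noteq> 0"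
    and "digits3 x" and "x 0 \<noteq> 0"
    and "\<not> [x 0 ^ 2 + a 0 = 0] (mod 3)"
  shows "is_solution3 a b x \<longleftrightarrow>
           ([x 0 ^ 3 = b 0] (mod 3) \<and>
            (\<forall>k\<ge>1. [Lhs a x k (Mk a b x k) = b k] (mod 3)))"
proof -
  define r where "r j = T a x j - b j + Mk a b x j" for j
  define R where "R n = (\<Sum>j<n. (3::int)^j * (r j mod 3))" for n
  have rhs: "([x 0 ^ 3 = b 0] (mod 3) \<and> (\<forall>k\<ge>1. [Lhs a x k (Mk a b x k) = b k] (mod 3)))
      \<longleftrightarrow> (\<forall>k. r k mod 3 = 0)"
  proof -
    have "[Lhs a x k (Mk a b x k) = b k] (mod 3) \<longleftrightarrow> r k mod 3 = 0" if "k \<ge> 1" for k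
      using that by (simp add: cong_iff_dvd_diff r_def T_def Lhs_add[of a x k "Mk a b x k"] algebra_simps dvd_eq_mod_eq_0)
    moreover have "[x 0 ^ 3 = b 0] (mod 3) \<longleftrightarrow> r 0 mod 3 = 0"
      by (simp add: cong_iff_dvd_diff r_def T_def dvd_eq_mod_eq_0)
    moreover have "(\<forall>k. r k mod 3 = 0) \<longleftrightarrow> r 0 mod 3 = 0 \<and> (\<forall>k\<ge>1. r k mod 3 = 0)"
    proof (intro iffI allI)
      fix k assume "r 0 mod 3 = 0 \<and> (\<forall>k\<ge>1. r k mod 3 = 0)"
      then show "r k mod 3 = 0" by (cases k) auto
    qed simp
    ultimately show ?thesis by auto
  qed
  have lhs: "is_solution3 a b x \<longleftrightarrow> (\<forall>n. (3::int)^n dvd R n)"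
    unfolding main_cong carry R_def r_def by (simp add: dvd_add_right_iff)
  show ?thesis unfolding lhs rhs
  proof
    assume H: "\<forall>n. (3::int)^n dvd R n"
    show "\<forall>k. r k mod 3 = 0"
    proof
      fix k
      have "R (Suc k) = 0"
      proof (rule ccontr)
        assume "R (Suc k) \<noteq> 0"
        moreover have "R (Suc k) \<ge> 0" unfolding R_def by (intro sum_nonneg) simp
        ultimately have "3^Suc k \<le> R (Suc k)" using H[rule_format, of "Suc k"] by (intro zdvd_imp_le) (simp_all del: power_Suc)
        with bound[of r "Suc k"] show False unfolding R_def by simp
      qed
      then have "\<forall>j\<in>{..<Suc k}. (3::int)^j * (r j mod 3) = 0"
        unfolding R_def by (subst sum_nonneg_eq_0_iff[symmetric]) auto
      then show "r k mod 3 = 0" by simp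
    qed
  next
    assume "\<forall>k. r k mod 3 = 0"
    then show "\<forall>n. (3::int)^n dvd R n" by (simp add: R_def)
  qed
qed

end
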